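(* Let $(V,E)$ be a finite graph with $E\ne\emptyset$ and $p\in(0,1)$. Let $(\eta_t,\sigma_t)_{t\ge0}$ be a continuous-time Markov jump process on $\{0,1\}^E\times\{-1,1\}^V$ with rates: if there exists $x\in V$ such that $\sigma'=\sigma^x$ and $\eta'(e)=\eta(e)$ for all $e\in E\setminus E_x$, then $c((\eta,\sigma),(\eta',\sigma'))=(1-p)^{|\{e\in E_x:\eta'(e)=0\}|}p^{|\{e\in E_x:\eta'(e)=1\}|}\mathbf 1_{(\eta',\sigma')\in\mathcal C_x}$; all other off-diagonal rates are $0$. Then $(\eta_t,\sigma_t)_{t\ge0}$ is reversible with respect to $IP$; its spin marginal $(\sigma_t)_{t\ge0}$ is a Markov jump process evolving according to the Glauber dynamics with rates $c(\sigma,\sigma^x)=(1-p)^{|\{e\in E_x:\delta_\sigma(e)=1\}|}$ for $x\in V$ (and rate $0$ for changes of two or more spins); and its edge marginal $(\eta_t)_{t\ge0}$ is not a Markov jump process.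
   Context: Edge configurations $\eta\in\{0,1\}^E$, spin configurations $\sigma\in\{-1,1\}^V$. For $e=\langle x,y\rangle$, $\delta_\sigma(e)=\mathbf 1_{\sigma(x)=\sigma(y)}$. $IP(\eta,\sigma)=\frac1Z\prod_{e\in E}\big(p\mathbf 1_{\eta(e)=1}\delta_\sigma(e)+(1-p)\mathbf 1_{\eta(e)=0}\big)$ with $Z$ the normalizing constant. $E_x$ is the set of edges with endvertex $x$; $\sigma^x$ is $\sigma$ with the spin at $x$ flipped. $\mathcal C_x=\{(\eta,\sigma):\eta(e)\le\delta_\sigma(e)\text{ for all }e\in E_x\}$. Reversibility w.r.t. $IP$ means $IP(a)c(a,b)=IP(b)c(b,a)$ for all states $a,b$. A marginal process is a Markov jump process if it is a time-homogeneous Markov process for every initial distribution, with transition rates not depending on the initial distribution. *)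

theory Defs
  imports Complex_Main
begin

definition generator :: "'s set \<Rightarrow> ('s \<Rightarrow> 's \<Rightarrow> real) \<Rightarrow> 's \<Rightarrow> 's \<Rightarrow> real" where
  "generator S c a b = (if a = b then - (\<Sum>b'\<in>S - {a}. c a b') else c a b)"

fun matpow :: "'s set \<Rightarrow> ('s \<Rightarrow> 's \<Rightarrow> real) \<Rightarrow> nat \<Rightarrow> 's \<Rightarrow> 's \<Rightarrow> real" where
  "matpow S Q 0 a b = (if a = b then 1 else 0)"
| "matpow S Q (Suc n) a b = (\<Sum>m\<in>S. matpow S Q n a m * Q m b)"

definition trans_fun :: "'s set \<Rightarrow> ('s \<Rightarrow> 's \<Rightarrow> real) \<Rightarrow> real \<Rightarrow> 's \<Rightarrow> 's \<Rightarrow> real" where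
  "trans_fun S c t a b = (\<Sum>n. t ^ n / fact n * matpow S (generator S c) n a b)"

text \<open>Probability that the observed process f(X) takes the values y_i at times t_i
  (list of pairs (t_i, y_i)), given X at time t0 is in state a.\<close>
fun mfdd_from :: "'s set \<Rightarrow> ('s \<Rightarrow> 's \<Rightarrow> real) \<Rightarrow> ('s \<Rightarrow> 'o) \<Rightarrow> 's \<Rightarrow> real
    \<Rightarrow> (real \<times> 'o) list \<Rightarrow> real" where
  "mfdd_from S c f a t0 [] = 1"
| "mfdd_from S c f a t0 ((t, y) # rest) =
     (\<Sum>b\<in>{b\<in>S. f b = y}. trans_fun S c (t - t0) a b * mfdd_from S c f b t rest)"

definition mfdd :: "'s set \<Rightarrow> ('s \<Rightarrow> 's \<Rightarrow> real) \<Rightarrow> ('s \<Rightarrow> real) \<Rightarrow> ('s \<Rightarrow> 'o)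
    \<Rightarrow> (real \<times> 'o) list \<Rightarrow> real" where
  "mfdd S c \<mu> f obs = (\<Sum>a\<in>S. \<mu> a * mfdd_from S c f a 0 obs)"

definition valid_times :: "(real \<times> 'o) list \<Rightarrow> bool" where
  "valid_times obs \<longleftrightarrow> sorted (map fst obs) \<and> (\<forall>t\<in>set (map fst obs). 0 \<le> t)"

definition is_distr :: "'s set \<Rightarrow> ('s \<Rightarrow> real) \<Rightarrow> bool" where
  "is_distr S \<mu> \<longleftrightarrow> (\<forall>a\<in>S. 0 \<le> \<mu> a) \<and> (\<Sum>a\<in>S. \<mu> a) = 1"

definition push :: "'s set \<Rightarrow> ('s \<Rightarrow> 'o) \<Rightarrow> ('s \<Rightarrow> real) \<Rightarrow> 'o \<Rightarrow> real" where
  "push S f \<mu> y = (\<Sum>a\<in>{a\<in>S. f a = y}. \<mu> a)"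

definition is_rate :: "'s set \<Rightarrow> ('s \<Rightarrow> 's \<Rightarrow> real) \<Rightarrow> bool" where
  "is_rate S c \<longleftrightarrow> (\<forall>a\<in>S. \<forall>b\<in>S. a \<noteq> b \<longrightarrow> 0 \<le> c a b)"

text \<open>The marginal f(X) of the jump process (S,c) is, for every initial distribution,
  a time-homogeneous Markov jump process on T with rates c' (equality of all fdds).\<close>
definition marginal_is_mjp_with :: "'s set \<Rightarrow> ('s \<Rightarrow> 's \<Rightarrow> real) \<Rightarrow> ('s \<Rightarrow> 'o)
    \<Rightarrow> 'o set \<Rightarrow> ('o \<Rightarrow> 'o \<Rightarrow> real) \<Rightarrow> bool" where
  "marginal_is_mjp_with S c f T c' \<longleftrightarrow>
     (\<forall>\<mu>. is_distr S \<mu> \<longrightarrow> (\<forall>obs. valid_times obs \<longrightarrow> set (map snd obs) \<subseteq> T \<longrightarrow>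
        mfdd S c \<mu> f obs = mfdd T c' (push S f \<mu>) id obs))"

definition marginal_is_mjp :: "'s set \<Rightarrow> ('s \<Rightarrow> 's \<Rightarrow> real) \<Rightarrow> ('s \<Rightarrow> 'o) \<Rightarrow> 'o set \<Rightarrow> bool" where
  "marginal_is_mjp S c f T \<longleftrightarrow> (\<exists>c'. is_rate T c' \<and> marginal_is_mjp_with S c f T c')"

definition reversible :: "'s set \<Rightarrow> ('s \<Rightarrow> real) \<Rightarrow> ('s \<Rightarrow> 's \<Rightarrow> real) \<Rightarrow> bool" where
  "reversible S \<pi> c \<longleftrightarrow> (\<forall>a\<in>S. \<forall>b\<in>S. \<pi> a * c a b = \<pi> b * c b a)"

text \<open>Vertices: the finite type 'v (V = UNIV); edges: 2-element vertex sets in E.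
  Edge configurations: functions into {0,1} on E, zero off E; spins: functions into {-1,1}.\<close>

type_synonym 'v econf = "'v set \<Rightarrow> nat"
type_synonym 'v sconf = "'v \<Rightarrow> int"

definition Eta :: "'v set set \<Rightarrow> 'v econf set" where
  "Eta E = {\<eta>. (\<forall>e\<in>E. \<eta> e \<in> {0, 1}) \<and> (\<forall>e. e \<notin> E \<longrightarrow> \<eta> e = 0)}"

definition Sig :: "'v sconf set" where
  "Sig = {\<sigma>. \<forall>x. \<sigma> x \<in> {-1, 1}}"

definition States :: "'v set set \<Rightarrow> ('v econf \<times> 'v sconf) set" where
  "States E = Eta E \<times> Sig"

definition edges_at :: "'v set set \<Rightarrow> 'v \<Rightarrow> 'v set set" where
  "edges_at E x = {e\<in>E. x \<in> e}"

definition delta :: "'v sconf \<Rightarrow> 'v set \<Rightarrow> nat" where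
  "delta \<sigma> e = (if \<forall>x\<in>e. \<forall>y\<in>e. \<sigma> x = \<sigma> y then 1 else 0)"

definition flip :: "'v sconf \<Rightarrow> 'v \<Rightarrow> 'v sconf" where
  "flip \<sigma> x = \<sigma>(x := - \<sigma> x)"

definition IPweight :: "'v set set \<Rightarrow> real \<Rightarrow> 'v econf \<times> 'v sconf \<Rightarrow> real" where
  "IPweight E p s = (case s of (\<eta>, \<sigma>) \<Rightarrow>
     (\<Prod>e\<in>E. p * (if \<eta> e = 1 then 1 else 0) * real (delta \<sigma> e) + (1 - p) * (if \<eta> e = 0 then 1 else 0)))"

definition IP :: "'v set set \<Rightarrow> real \<Rightarrow> 'v econf \<times> 'v sconf \<Rightarrow> real" where
  "IP E p s = IPweight E p s / (\<Sum>s'\<in>States E. IPweight E p s')"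

definition Cx :: "'v set set \<Rightarrow> 'v \<Rightarrow> ('v econf \<times> 'v sconf) set" where
  "Cx E x = {(\<eta>, \<sigma>). \<forall>e\<in>edges_at E x. \<eta> e \<le> delta \<sigma> e}"

text \<open>Joint rates: the vertex x is unique when it exists (sigma' = sigma^x).\<close>
definition joint_rate :: "'v set set \<Rightarrow> real \<Rightarrow> 'v econf \<times> 'v sconf \<Rightarrow> 'v econf \<times> 'v sconf \<Rightarrow> real" where
  "joint_rate E p s s' = (case s of (\<eta>, \<sigma>) \<Rightarrow> case s' of (\<eta>', \<sigma>') \<Rightarrow>
     (if \<exists>x. \<sigma>' = flip \<sigma> x \<and> (\<forall>e\<in>E - edges_at E x. \<eta>' e = \<eta> e) then
        (let x = (THE x. \<sigma>' = flip \<sigma> x \<and> (\<forall>e\<in>E - edges_at E x. \<eta>' e = \<eta> e)) in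
          (1 - p) ^ card {e\<in>edges_at E x. \<eta>' e = 0} * p ^ card {e\<in>edges_at E x. \<eta>' e = 1}
          * (if (\<eta>', \<sigma>') \<in> Cx E x then 1 else 0))
      else 0))"

definition glauber_rate :: "'v set set \<Rightarrow> real \<Rightarrow> 'v sconf \<Rightarrow> 'v sconf \<Rightarrow> real" where
  "glauber_rate E p \<sigma> \<sigma>' =
     (if \<exists>x. \<sigma>' = flip \<sigma> x then
        (let x = (THE x. \<sigma>' = flip \<sigma> x) in (1 - p) ^ card {e\<in>edges_at E x. delta \<sigma> e = 1})
      else 0)"

end

theory Submission
  imports Defs "HOL-Library.FuncSet"
begin


lemma matpow_bound:
  assumes "finite S" "\<And>m b. \<bar>Q m b\<bar> \<le> B" "0 \<le> B"
  shows "\<bar>matpow S Q n a b\<bar> \<le> (real (card S) * B) ^ n"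
proof (induction n arbitrary: b)
  case 0 then show ?case by simp
next
  case (Suc n)
  have "\<bar>matpow S Q (Suc n) a b\<bar> \<le> (\<Sum>m\<in>S. \<bar>matpow S Q n a m * Q m b\<bar>)"
    by (simp add: sum_abs)
  also have "\<dots> \<le> (\<Sum>m\<in>S. (real (card S) * B) ^ n * B)"
    by (rule sum_mono) (simp add: abs_mult Suc mult_mono assms)
  also have "\<dots> = (real (card S) * B) ^ Suc n" by (simp add: algebra_simps)
  finally show ?case .
qed

lemma exp_like_summable:
  fixes d :: "nat \<Rightarrow> real"
  assumes "\<And>n. \<bar>d n\<bar> \<le> C * K ^ n" "0 \<le> K"
  shows "summable (\<lambda>n. t ^ n / fact n * d n)"
proof (rule summable_comparison_test[where g = "\<lambda>n. C * (inverse (fact n) * (K * \<bar>t\<bar>) ^ n)"])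
  show "summable (\<lambda>n. C * (inverse (fact n) * (K * \<bar>t\<bar>) ^ n))"
    by (intro summable_mult summable_exp)
  show "\<exists>N. \<forall>n\<ge>N. norm (t ^ n / fact n * d n) \<le> C * (inverse (fact n) * (K * \<bar>t\<bar>) ^ n)"
  proof (intro exI allI impI)
    fix n
    have "norm (t ^ n / fact n * d n) = \<bar>t\<bar> ^ n / fact n * \<bar>d n\<bar>"
      by (simp add: abs_mult power_abs)
    also have "\<dots> \<le> \<bar>t\<bar> ^ n / fact n * (C * K ^ n)"
      by (intro mult_left_mono assms) auto
    also have "\<dots> = C * (inverse (fact n) * (K * \<bar>t\<bar>) ^ n)"
      by (simp add: power_mult_distrib field_simps)
    finally show "norm (t ^ n / fact n * d n) \<le> C * (inverse (fact n) * (K * \<bar>t\<bar>) ^ n)" .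
  qed
qed

definition gbound :: "'s set \<Rightarrow> real" where
  "gbound S = real (card S) * (real (card S) + 1)"

lemma generator_bound:
  assumes "finite S" "\<And>a b. \<bar>c a b\<bar> \<le> 1"
  shows "\<bar>generator S c a b\<bar> \<le> real (card S) + 1"
proof (cases "a = b")
  case True
  have "\<bar>\<Sum>b'\<in>S - {a}. c a b'\<bar> \<le> (\<Sum>b'\<in>S - {a}. 1)"
    by (rule order_trans[OF sum_abs]) (rule sum_mono, rule assms)
  also have "\<dots> \<le> real (card S)" using assms(1) by (simp add: card_Diff_subset_Int) 
  finally show ?thesis using True by (simp add: generator_def)
next
  case False
  then show ?thesis using assms(2)[of a b] by (simp add: generator_def)
qed

lemma trans_summable:
  assumes "finite S" "\<And>a b. \<bar>c a b\<bar> \<le> 1"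
  shows "summable (\<lambda>n. t ^ n / fact n * matpow S (generator S c) n a b)"
  apply (rule exp_like_summable[where C = 1 and K = "real (card S) * (real (card S) + 1)"])
  using matpow_bound[OF assms(1) generator_bound[OF assms]] by auto

lemma lump_generator:
  assumes fin: "finite S" "finite T" and fST: "f ` S \<subseteq> T"
    and lr: "\<And>a y. a \<in> S \<Longrightarrow> y \<in> T \<Longrightarrow> y \<noteq> f a \<Longrightarrow> (\<Sum>b\<in>{b\<in>S. f b = y}. c a b) = c' (f a) y"
    and z: "\<And>a b. a \<in> S \<Longrightarrow> b \<in> S \<Longrightarrow> b \<noteq> a \<Longrightarrow> f b = f a \<Longrightarrow> c a b = 0"
    and a: "a \<in> S" and y: "y \<in> T"
  shows "(\<Sum>b\<in>{b\<in>S. f b = y}. generator S c a b) = generator T c' (f a) y"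
proof (cases "y = f a")
  case False
  have "(\<Sum>b\<in>{b\<in>S. f b = y}. generator S c a b) = (\<Sum>b\<in>{b\<in>S. f b = y}. c a b)"
    by (rule sum.cong) (use False in \<open>auto simp: generator_def\<close>)
  also have "\<dots> = c' (f a) y" using lr a y False by blast
  finally show ?thesis using False by (simp add: generator_def)
next
  case True
  have fa: "f a \<in> T" using fST a by auto
  have "(\<Sum>b\<in>{b\<in>S. f b = y}. generator S c a b) = generator S c a a + (\<Sum>b\<in>{b\<in>S. f b = y} - {a}. generator S c a b)"
    by (rule sum.remove) (use a True fin in auto)
  also have "(\<Sum>b\<in>{b\<in>S. f b = y} - {a}. generator S c a b) = 0"
  proof (rule sum.neutral, rule ballI)
    fix b assume "b \<in> {b\<in>S. f b = y} - {a}"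
    then have "b \<in> S" "b \<noteq> a" "f b = f a" using True by auto
    then show "generator S c a b = 0" using z[OF a] by (simp add: generator_def)
  qed
  also have "generator S c a a = - (\<Sum>b\<in>S - {a}. c a b)" by (simp add: generator_def)
  also have "(\<Sum>b\<in>S - {a}. c a b) = (\<Sum>z\<in>T. \<Sum>b\<in>{b\<in>S - {a}. f b = z}. c a b)"
    by (rule sum.group[symmetric]) (use fin fST in auto)
  also have "\<dots> = (\<Sum>z\<in>T - {f a}. c' (f a) z)"
  proof -
    have "(\<Sum>z\<in>T. \<Sum>b\<in>{b\<in>S - {a}. f b = z}. c a b) = (\<Sum>b\<in>{b\<in>S - {a}. f b = f a}. c a b) + (\<Sum>z\<in>T - {f a}. \<Sum>b\<in>{b\<in>S - {a}. f b = z}. c a b)"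
      by (rule sum.remove) (use fa fin in auto)
    also have "(\<Sum>b\<in>{b\<in>S - {a}. f b = f a}. c a b) = 0"
      using z[OF a] by (intro sum.neutral) auto
    also have "(\<Sum>z\<in>T - {f a}. \<Sum>b\<in>{b\<in>S - {a}. f b = z}. c a b) = (\<Sum>z\<in>T - {f a}. c' (f a) z)"
    proof (rule sum.cong)
      fix z assume zz: "z \<in> T - {f a}"
      have "{b\<in>S - {a}. f b = z} = {b\<in>S. f b = z}" using zz by auto
      then show "(\<Sum>b\<in>{b\<in>S - {a}. f b = z}. c a b) = c' (f a) z" using lr[OF a] zz by auto
    qed simp
    finally show ?thesis by simp
  qed
  finally show ?thesis using True by (simp add: generator_def)
qed

lemma lump_matpow:
  assumes fin: "finite S" "finite T" and fST: "f ` S \<subseteq> T"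
    and lg: "\<And>a y. a \<in> S \<Longrightarrow> y \<in> T \<Longrightarrow> (\<Sum>b\<in>{b\<in>S. f b = y}. Q a b) = Q' (f a) y"
    and a: "a \<in> S"
  shows "y \<in> T \<Longrightarrow> (\<Sum>b\<in>{b\<in>S. f b = y}. matpow S Q n a b) = matpow T Q' n (f a) y"
proof (induction n arbitrary: y)
  case 0
  show ?case
  proof (cases "f a = y")
    case True
    then have "(\<Sum>b\<in>{b\<in>S. f b = y}. matpow S Q 0 a b) = (\<Sum>b\<in>{b\<in>S. f b = y}. if b = a then 1 else 0)"
      by (intro sum.cong) auto
    also have "\<dots> = 1" using True a fin by (simp add: sum.delta')
    finally show ?thesis using True by simp
  next
    case False
    then show ?thesis by (simp, intro sum.neutral) auto
  qed
next
  case (Suc n)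
  have "(\<Sum>b\<in>{b\<in>S. f b = y}. matpow S Q (Suc n) a b) = (\<Sum>m\<in>S. matpow S Q n a m * (\<Sum>b\<in>{b\<in>S. f b = y}. Q m b))"
    by (simp add: sum_distrib_left) (rule sum.swap)
  also have "\<dots> = (\<Sum>m\<in>S. matpow S Q n a m * Q' (f m) y)"
    using lg Suc.prems by simp
  also have "\<dots> = (\<Sum>z\<in>T. \<Sum>m\<in>{m\<in>S. f m = z}. matpow S Q n a m * Q' (f m) y)"
    by (rule sum.group[symmetric]) (use fin fST in auto)
  also have "\<dots> = (\<Sum>z\<in>T. matpow T Q' n (f a) z * Q' z y)"
  proof (rule sum.cong)
    fix z assume z: "z \<in> T"
    have "(\<Sum>m\<in>{m\<in>S. f m = z}. matpow S Q n a m * Q' (f m) y) = (\<Sum>m\<in>{m\<in>S. f m = z}. matpow S Q n a m) * Q' z y"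
      by (simp add: sum_distrib_right)
    then show "(\<Sum>m\<in>{m\<in>S. f m = z}. matpow S Q n a m * Q' (f m) y) = matpow T Q' n (f a) z * Q' z y"
      using Suc.IH[OF z] by simp
  qed simp
  finally show ?case by simp
qed

lemma lump_trans:
  assumes fin: "finite S" "finite T" and fST: "f ` S \<subseteq> T"
    and lr: "\<And>a y. a \<in> S \<Longrightarrow> y \<in> T \<Longrightarrow> y \<noteq> f a \<Longrightarrow> (\<Sum>b\<in>{b\<in>S. f b = y}. c a b) = c' (f a) y"
    and z: "\<And>a b. a \<in> S \<Longrightarrow> b \<in> S \<Longrightarrow> b \<noteq> a \<Longrightarrow> f b = f a \<Longrightarrow> c a b = 0"
    and cb: "\<And>a b. \<bar>c a b\<bar> \<le> 1" and cb': "\<And>a b. \<bar>c' a b\<bar> \<le> 1"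
    and a: "a \<in> S" and y: "y \<in> T"
  shows "(\<Sum>b\<in>{b\<in>S. f b = y}. trans_fun S c t a b) = trans_fun T c' t (f a) y"
proof -
  have "(\<Sum>b\<in>{b\<in>S. f b = y}. trans_fun S c t a b) =
     (\<Sum>n. \<Sum>b\<in>{b\<in>S. f b = y}. t ^ n / fact n * matpow S (generator S c) n a b)"
    unfolding trans_fun_def
    by (rule suminf_sum[symmetric]) (rule trans_summable[OF fin(1) cb])
  also have "\<dots> = (\<Sum>n. t ^ n / fact n * matpow T (generator T c') n (f a) y)"
  proof -
    have lg: "\<And>a y. a \<in> S \<Longrightarrow> y \<in> T \<Longrightarrow> (\<Sum>b\<in>{b\<in>S. f b = y}. generator S c a b) = generator T c' (f a) y"
      by (rule lump_generator) (use fin fST lr z in auto)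
    have lm: "(\<Sum>b\<in>{b\<in>S. f b = y}. matpow S (generator S c) n a b) = matpow T (generator T c') n (f a) y" for n
      by (rule lump_matpow) (use fin fST lg a y in auto)
    show ?thesis by (simp only: sum_distrib_left[symmetric] lm)
  qed
  finally show ?thesis unfolding trans_fun_def .
qed

lemma lump_mfdd_from:
  assumes fin: "finite S" "finite T" and fST: "f ` S \<subseteq> T"
    and lr: "\<And>a y. a \<in> S \<Longrightarrow> y \<in> T \<Longrightarrow> y \<noteq> f a \<Longrightarrow> (\<Sum>b\<in>{b\<in>S. f b = y}. c a b) = c' (f a) y"
    and z: "\<And>a b. a \<in> S \<Longrightarrow> b \<in> S \<Longrightarrow> b \<noteq> a \<Longrightarrow> f b = f a \<Longrightarrow> c a b = 0"
    and cb: "\<And>a b. \<bar>c a b\<bar> \<le> 1" and cb': "\<And>a b. \<bar>c' a b\<bar> \<le> 1"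
  shows "a \<in> S \<Longrightarrow> set (map snd obs) \<subseteq> T \<Longrightarrow> mfdd_from S c f a t0 obs = mfdd_from T c' id (f a) t0 obs"
proof (induction obs arbitrary: a t0)
  case Nil then show ?case by simp
next
  case (Cons ty rest)
  obtain t y where ty: "ty = (t, y)" by force
  have y: "y \<in> T" and rT: "set (map snd rest) \<subseteq> T" using Cons.prems ty by auto
  have "mfdd_from S c f a t0 (ty # rest) = (\<Sum>b\<in>{b\<in>S. f b = y}. trans_fun S c (t - t0) a b * mfdd_from T c' id y t rest)"
  proof -
    have "mfdd_from S c f a t0 (ty # rest) = (\<Sum>b\<in>{b\<in>S. f b = y}. trans_fun S c (t - t0) a b * mfdd_from S c f b t rest)"
      using ty by simp
    also have "\<dots> = (\<Sum>b\<in>{b\<in>S. f b = y}. trans_fun S c (t - t0) a b * mfdd_from T c' id y t rest)"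
    proof (rule sum.cong[OF refl])
      fix b assume b: "b \<in> {b\<in>S. f b = y}"
      have "mfdd_from S c f b t rest = mfdd_from T c' id (f b) t rest"
        using b rT by (intro Cons.IH) auto
      then show "trans_fun S c (t - t0) a b * mfdd_from S c f b t rest = trans_fun S c (t - t0) a b * mfdd_from T c' id y t rest"
        using b by simp
    qed
    finally show ?thesis .
  qed
  also have "\<dots> = trans_fun T c' (t - t0) (f a) y * mfdd_from T c' id y t rest"
  proof -
    have "(\<Sum>b\<in>{b\<in>S. f b = y}. trans_fun S c (t - t0) a b) = trans_fun T c' (t - t0) (f a) y"
      by (rule lump_trans) (use fin fST lr z cb cb' Cons.prems(1) y in auto)
    then show ?thesis by (simp add: sum_distrib_right[symmetric])
  qed
  also have "\<dots> = mfdd_from T c' id (f a) t0 (ty # rest)"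
  proof -
    have "{b\<in>T. id b = y} = {y}" using y by auto
    then show ?thesis using ty by simp
  qed
  finally show ?case .
qed

lemma lump_mjp:
  assumes fin: "finite S" "finite T" and fST: "f ` S \<subseteq> T"
    and lr: "\<And>a y. a \<in> S \<Longrightarrow> y \<in> T \<Longrightarrow> y \<noteq> f a \<Longrightarrow> (\<Sum>b\<in>{b\<in>S. f b = y}. c a b) = c' (f a) y"
    and z: "\<And>a b. a \<in> S \<Longrightarrow> b \<in> S \<Longrightarrow> b \<noteq> a \<Longrightarrow> f b = f a \<Longrightarrow> c a b = 0"
    and cb: "\<And>a b. \<bar>c a b\<bar> \<le> 1" and cb': "\<And>a b. \<bar>c' a b\<bar> \<le> 1"
  shows "marginal_is_mjp_with S c f T c'"
  unfolding marginal_is_mjp_with_def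
proof (intro allI impI)
  fix \<mu> :: "_ \<Rightarrow> real" and obs :: "(real \<times> _) list"
  assume obs: "set (map snd obs) \<subseteq> T"
  have "mfdd S c \<mu> f obs = (\<Sum>a\<in>S. \<mu> a * mfdd_from T c' id (f a) 0 obs)"
  proof -
    have "mfdd_from S c f a 0 obs = mfdd_from T c' id (f a) 0 obs" if "a \<in> S" for a
      by (rule lump_mfdd_from) (use fin fST lr z cb cb' obs that in auto)
    then show ?thesis unfolding mfdd_def by (intro sum.cong) auto
  qed
  also have "\<dots> = (\<Sum>w\<in>T. \<Sum>a\<in>{a\<in>S. f a = w}. \<mu> a * mfdd_from T c' id (f a) 0 obs)"
    by (rule sum.group[symmetric]) (use fin fST in auto)
  also have "\<dots> = (\<Sum>w\<in>T. push S f \<mu> w * mfdd_from T c' id w 0 obs)"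
    unfolding push_def by (auto simp: sum_distrib_right intro!: sum.cong)
  finally show "mfdd S c \<mu> f obs = mfdd T c' (push S f \<mu>) id obs" by (simp add: mfdd_def)
qed



lemma ps_deriv_zero:
  fixes d :: "nat \<Rightarrow> real"
  assumes bd: "\<And>n. \<bar>d n\<bar> \<le> C * K ^ n" and K: "0 \<le> K"
    and z: "\<And>t. 0 \<le> t \<Longrightarrow> (\<Sum>n. t ^ n / fact n * d n) = 0"
  shows "d 1 = 0"
proof -
  define cc where "cc n = d n / fact n" for n
  have eq: "t ^ n / fact n * d n = cc n * t ^ n" for t :: real and n
    by (simp add: cc_def)
  have sm: "summable (\<lambda>n. cc n * y ^ n)" for y :: real
    using exp_like_summable[OF bd K, of y] unfolding eq .
  define h where "h x = (\<Sum>n. cc n * x ^ n)" for x :: real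
  have D: "(h has_field_derivative (\<Sum>n. diffs cc n * 0 ^ n)) (at 0)"
    unfolding h_def by (rule termdiffs_strong_converges_everywhere[OF sm])
  have D1: "(\<Sum>n. diffs cc n * 0 ^ n) = d 1"
    by (simp only: powser_zero) (simp add: diffs_def cc_def)
  have h0: "h x = 0" if "0 \<le> x" for x
    using z[OF that] unfolding h_def eq .
  have T: "((\<lambda>y. (h y - h 0) / (y - 0)) \<longlongrightarrow> d 1) (at 0)"
    using D D1 by (simp add: has_field_derivative_iff)
  have T': "((\<lambda>y. (h y - h 0) / (y - 0)) \<longlongrightarrow> d 1) (at_right 0)"
    by (rule tendsto_mono[OF _ T]) (simp add: at_le)
  have ev: "\<forall>\<^sub>F y in at_right (0::real). (h y - h 0) / (y - 0) = 0"
    using eventually_at_right_less[of "0::real"] by eventually_elim (simp add: h0)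
  have T0: "((\<lambda>y. (h y - h 0) / (y - 0)) \<longlongrightarrow> 0) (at_right 0)"
    by (rule tendsto_eventually[OF ev])
  show ?thesis
    using tendsto_unique[OF trivial_limit_at_right_real T' T0] .
qed

definition W :: "real \<Rightarrow> nat \<Rightarrow> real \<Rightarrow> real" where
  "W p v d = p * (if v = 1 then 1 else 0) * d + (1 - p) * (if v = 0 then 1 else 0)"

lemma finite_Sig: "finite (Sig :: ('v::finite) sconf set)"
proof (rule finite_subset)
  show "Sig \<subseteq> PiE (UNIV :: 'v set) (\<lambda>_. {-1, 1::int})"
    by (auto simp: Sig_def PiE_def Pi_def extensional_def)
  show "finite (PiE (UNIV :: 'v set) (\<lambda>_. {-1, 1::int}))"
    by (rule finite_PiE) auto
qed

lemma finite_Eta: "finite (Eta (E :: ('v::finite) set set))"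
proof (rule finite_subset)
  show "Eta E \<subseteq> PiE (UNIV :: 'v set set) (\<lambda>e. if e \<in> E then {0, 1::nat} else {0})"
    by (auto simp: Eta_def PiE_def Pi_def extensional_def)
  show "finite (PiE (UNIV :: 'v set set) (\<lambda>e. if e \<in> E then {0, 1::nat} else {0}))"
    by (rule finite_PiE) auto
qed

lemma finite_States: "finite (States (E :: ('v::finite) set set))"
  unfolding States_def using finite_Sig finite_Eta by blast

lemma flip_flip[simp]: "flip (flip \<sigma> x) x = \<sigma>"
  by (auto simp: flip_def)

lemma flip_Sig: "\<sigma> \<in> Sig \<Longrightarrow> flip \<sigma> x \<in> Sig"
  by (auto simp: flip_def Sig_def)

lemma Sig_ne0: "\<sigma> \<in> Sig \<Longrightarrow> \<sigma> x \<noteq> 0"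
  by (auto simp: Sig_def dest: spec[of _ x])

lemma flip_inj: "\<sigma> \<in> Sig \<Longrightarrow> flip \<sigma> x = flip \<sigma> y \<Longrightarrow> x = y"
proof (rule ccontr)
  assume s: "\<sigma> \<in> Sig" and e: "flip \<sigma> x = flip \<sigma> y" and n: "x \<noteq> y"
  have "flip \<sigma> x x = flip \<sigma> y x" using e by simp
  then have "- \<sigma> x = \<sigma> x" using n by (simp add: flip_def)
  then show False using Sig_ne0[OF s, of x] by simp
qed

lemma flip_neq: "\<sigma> \<in> Sig \<Longrightarrow> flip \<sigma> x \<noteq> \<sigma>"
proof
  assume s: "\<sigma> \<in> Sig" and e: "flip \<sigma> x = \<sigma>"
  then have "- \<sigma> x = \<sigma> x" by (metis flip_def fun_upd_same)
  then show False using Sig_ne0[OF s, of x] by simp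
qed

lemma delta_pair: "delta \<sigma> {a, b} = (if \<sigma> a = \<sigma> b then 1 else 0)"
  by (auto simp: delta_def)

lemma delta_01: "delta \<sigma> e = 0 \<or> delta \<sigma> e = 1"
  by (simp add: delta_def)

lemma delta_flip_out: "x \<notin> e \<Longrightarrow> delta (flip \<sigma> x) e = delta \<sigma> e"
  unfolding delta_def flip_def by (metis fun_upd_other)

lemma delta_flip_in:
  assumes s: "\<sigma> \<in> Sig" and e: "e = {u, v}" "u \<noteq> v" and x: "x \<in> e"
  shows "delta (flip \<sigma> x) e = 1 - delta \<sigma> e"
proof -
  have su: "\<sigma> u \<in> {-1, 1}" and sv: "\<sigma> v \<in> {-1, 1}" using s by (auto simp: Sig_def)
  show ?thesis using x e su sv by (auto simp: delta_pair flip_def)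
qed

lemma rate_prod:
  assumes A: "finite A" and v: "\<And>e. e \<in> A \<Longrightarrow> \<eta>' e \<in> {0, 1}"
  shows "(1 - p) ^ card {e\<in>A. \<eta>' e = 0} * p ^ card {e\<in>A. \<eta>' e = 1}
      * (if \<forall>e\<in>A. \<eta>' e \<le> delta \<sigma>' e then 1 else 0) = (\<Prod>e\<in>A. W p (\<eta>' e) (real (delta \<sigma>' e)))"
proof (cases "\<forall>e\<in>A. \<eta>' e \<le> delta \<sigma>' e")
  case True
  have "(\<Prod>e\<in>A. W p (\<eta>' e) (real (delta \<sigma>' e))) = (\<Prod>e\<in>A. if \<eta>' e = 0 then 1 - p else p)"
  proof (rule prod.cong[OF refl])
    fix e assume e: "e \<in> A"
    show "W p (\<eta>' e) (real (delta \<sigma>' e)) = (if \<eta>' e = 0 then 1 - p else p)"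
      using v[OF e] True e delta_01[of \<sigma>' e] by (auto simp: W_def)
  qed
  also have "\<dots> = (\<Prod>e\<in>A \<inter> {e. \<eta>' e = 0}. 1 - p) * (\<Prod>e\<in>A \<inter> - {e. \<eta>' e = 0}. p)"
    by (rule prod.If_cases[OF A])
  also have "A \<inter> {e. \<eta>' e = 0} = {e\<in>A. \<eta>' e = 0}" by auto
  also have "A \<inter> - {e. \<eta>' e = 0} = {e\<in>A. \<eta>' e = 1}" using v by fastforce
  finally show ?thesis using True by simp
next
  case False
  then obtain e where e: "e \<in> A" "\<not> \<eta>' e \<le> delta \<sigma>' e" by auto
  then have "\<eta>' e = 1" "delta \<sigma>' e = 0" using v[OF e(1)] delta_01[of \<sigma>' e] by auto
  then have "W p (\<eta>' e) (real (delta \<sigma>' e)) = 0" by (simp add: W_def)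
  then have "(\<Prod>e\<in>A. W p (\<eta>' e) (real (delta \<sigma>' e))) = 0" using A e(1) by (intro prod_zero) auto
  then show ?thesis using False by (simp only: if_False mult_zero_right)
qed

lemma IPweight_prod: "IPweight E p (\<eta>, \<sigma>) = (\<Prod>e\<in>E. W p (\<eta> e) (real (delta \<sigma> e)))"
  by (simp add: IPweight_def W_def)

lemma jr_nonflip: "(\<forall>x. \<sigma>' \<noteq> flip \<sigma> x) \<Longrightarrow> joint_rate E p (\<eta>, \<sigma>) (\<eta>', \<sigma>') = 0"
  by (auto simp: joint_rate_def)

lemma jr_eq:
  fixes E :: "('v::finite) set set"
  assumes s: "\<sigma> \<in> Sig" and e': "\<eta>' \<in> Eta E"
  shows "joint_rate E p (\<eta>, \<sigma>) (\<eta>', flip \<sigma> x) =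
    (if \<forall>e\<in>E - edges_at E x. \<eta>' e = \<eta> e
     then (\<Prod>e\<in>edges_at E x. W p (\<eta>' e) (real (delta (flip \<sigma> x) e))) else 0)"
proof (cases "\<forall>e\<in>E - edges_at E x. \<eta>' e = \<eta> e")
  case True
  have ex: "\<exists>x'. flip \<sigma> x = flip \<sigma> x' \<and> (\<forall>e\<in>E - edges_at E x'. \<eta>' e = \<eta> e)"
    using True by blast
  have th: "(THE x'. flip \<sigma> x = flip \<sigma> x' \<and> (\<forall>e\<in>E - edges_at E x'. \<eta>' e = \<eta> e)) = x"
    by (rule the_equality) (use True flip_inj[OF s] in auto)
  have fin: "finite (edges_at E x)" by simp
  have v: "\<And>e. e \<in> edges_at E x \<Longrightarrow> \<eta>' e \<in> {0, 1}" using e' by (auto simp: Eta_def edges_at_def)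
  have cx: "((\<eta>', flip \<sigma> x) \<in> Cx E x) = (\<forall>e\<in>edges_at E x. \<eta>' e \<le> delta (flip \<sigma> x) e)"
    by (simp add: Cx_def)
  show ?thesis
    unfolding joint_rate_def using ex True
    by (simp only: prod.case th Let_def cx rate_prod[OF fin v] if_True) (use True in simp)
next
  case False
  have "\<not> (\<exists>x'. flip \<sigma> x = flip \<sigma> x' \<and> (\<forall>e\<in>E - edges_at E x'. \<eta>' e = \<eta> e))"
    using False flip_inj[OF s] by blast
  then show ?thesis using False unfolding joint_rate_def by (simp only: prod.case if_False)
qed


lemma jr_bounds:
  assumes "0 \<le> p" "p \<le> 1"
  shows "0 \<le> joint_rate E p s s' \<and> joint_rate E p s s' \<le> 1"
proof -
  have g: "0 \<le> (1 - p) ^ k * p ^ j * (if P then 1 else 0) \<and> (1 - p) ^ k * p ^ j * (if P then 1 else 0) \<le> (1::real)" for k j P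
    using assms by (auto intro!: mult_le_one power_le_one)
  show ?thesis unfolding joint_rate_def using g by (auto simp: Let_def split: prod.splits)
qed

lemma glauber_bounds:
  assumes "0 \<le> p" "p \<le> 1"
  shows "\<bar>glauber_rate E p s s'\<bar> \<le> 1"
  unfolding glauber_rate_def using assms by (auto simp: Let_def intro!: power_le_one)

lemma reversible_part:
  fixes E :: "('v::finite) set set"
  assumes edges: "\<forall>e\<in>E. \<exists>x y. x \<noteq> y \<and> e = {x, y}"
  shows "reversible (States E) (IP E p) (joint_rate E p)"
  unfolding reversible_def
proof (intro ballI)
  fix a b assume a: "a \<in> States E" and b: "b \<in> States E"
  obtain \<eta> \<sigma> where ab: "a = (\<eta>, \<sigma>)" by force
  obtain \<eta>' \<sigma>' where bb: "b = (\<eta>', \<sigma>')" by force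
  have s: "\<sigma> \<in> Sig" "\<eta> \<in> Eta E" using a ab by (auto simp: States_def)
  have s': "\<sigma>' \<in> Sig" "\<eta>' \<in> Eta E" using b bb by (auto simp: States_def)
  have finE: "finite E" by simp
  show "IP E p a * joint_rate E p a b = IP E p b * joint_rate E p b a"
  proof (cases "\<exists>x. \<sigma>' = flip \<sigma> x")
    case False
    then have "\<forall>x. \<sigma> \<noteq> flip \<sigma>' x" by (metis flip_flip)
    then show ?thesis using False ab bb by (simp add: jr_nonflip)
  next
    case True
    then obtain x where x: "\<sigma>' = flip \<sigma> x" by blast
    then have x': "\<sigma> = flip \<sigma>' x" by simp
    define A where "A = edges_at E x"
    have AE: "A \<subseteq> E" by (auto simp: A_def edges_at_def)
    have r1: "joint_rate E p a b = (if \<forall>e\<in>E - A. \<eta>' e = \<eta> e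
       then (\<Prod>e\<in>A. W p (\<eta>' e) (real (delta \<sigma>' e))) else 0)"
      using jr_eq[OF s(1) s'(2), of p \<eta> x] ab bb x by (simp add: A_def)
    have r2: "joint_rate E p b a = (if \<forall>e\<in>E - A. \<eta> e = \<eta>' e
       then (\<Prod>e\<in>A. W p (\<eta> e) (real (delta \<sigma> e))) else 0)"
      using jr_eq[OF s'(1) s(2), of p \<eta>' x] ab bb x' by (simp add: A_def)
    show ?thesis
    proof (cases "\<forall>e\<in>E - A. \<eta>' e = \<eta> e")
      case False
      then have "\<not> (\<forall>e\<in>E - A. \<eta> e = \<eta>' e)" by (metis Diff_iff)
      then have "joint_rate E p b a = 0" using r2 by (simp only: if_False)
      moreover have "joint_rate E p a b = 0" using r1 False by (simp only: if_False)
      ultimately show ?thesis by simp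
    next
      case agree: True
      have out: "(\<Prod>e\<in>E - A. W p (\<eta> e) (real (delta \<sigma> e))) = (\<Prod>e\<in>E - A. W p (\<eta>' e) (real (delta \<sigma>' e)))"
      proof (rule prod.cong[OF refl])
        fix e assume e: "e \<in> E - A"
        then have "x \<notin> e" by (auto simp: A_def edges_at_def)
        then show "W p (\<eta> e) (real (delta \<sigma> e)) = W p (\<eta>' e) (real (delta \<sigma>' e))"
          using agree e x by (simp add: delta_flip_out)
      qed
      have w1: "IPweight E p a = (\<Prod>e\<in>E - A. W p (\<eta> e) (real (delta \<sigma> e))) * (\<Prod>e\<in>A. W p (\<eta> e) (real (delta \<sigma> e)))"
        unfolding ab IPweight_prod by (rule prod.subset_diff[OF AE finE])
      have w2: "IPweight E p b = (\<Prod>e\<in>E - A. W p (\<eta>' e) (real (delta \<sigma>' e))) * (\<Prod>e\<in>A. W p (\<eta>' e) (real (delta \<sigma>' e)))"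
        unfolding bb IPweight_prod by (rule prod.subset_diff[OF AE finE])
      have "IPweight E p a * joint_rate E p a b = IPweight E p b * joint_rate E p b a"
        using r1 r2 agree w1 w2 out by (simp add: ac_simps)
      then show ?thesis unfolding IP_def by (simp add: field_simps)
    qed
  qed
qed

lemma delta_flip_E:
  assumes edges: "\<forall>e\<in>E. \<exists>x y. x \<noteq> y \<and> e = {x, y}" and s: "\<sigma> \<in> Sig"
    and e: "e \<in> edges_at E x"
  shows "delta (flip \<sigma> x) e = 1 - delta \<sigma> e"
proof -
  obtain u v where "u \<noteq> v" "e = {u, v}" using edges e by (auto simp: edges_at_def)
  then show ?thesis using delta_flip_in[OF s] e by (auto simp: edges_at_def)
qed

lemma sum_agree:
  fixes E :: "('v::finite) set set"
  assumes eta: "\<eta> \<in> Eta E"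
  shows "(\<Sum>\<eta>'\<in>Eta E. if \<forall>e\<in>E - edges_at E x. \<eta>' e = \<eta> e
           then (\<Prod>e\<in>edges_at E x. W p (\<eta>' e) (d e)) else 0)
       = (\<Prod>e\<in>edges_at E x. W p 0 (d e) + W p 1 (d e))"
proof -
  define A where "A = edges_at E x"
  have AE: "A \<subseteq> E" by (auto simp: A_def edges_at_def)
  have "(\<Sum>\<eta>'\<in>Eta E. if \<forall>e\<in>E - A. \<eta>' e = \<eta> e then (\<Prod>e\<in>A. W p (\<eta>' e) (d e)) else 0)
      = (\<Sum>\<eta>'\<in>{\<eta>'\<in>Eta E. \<forall>e\<in>E - A. \<eta>' e = \<eta> e}. \<Prod>e\<in>A. W p (\<eta>' e) (d e))"
    by (rule sum.inter_filter[symmetric, OF finite_Eta])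
  also have "\<dots> = (\<Sum>g\<in>PiE A (\<lambda>_. {0, 1}). \<Prod>e\<in>A. W p (g e) (d e))"
  proof (rule sum.reindex_bij_witness[symmetric, where j = "\<lambda>g e. if e \<in> A then g e else \<eta> e" and i = "\<lambda>\<eta>'. restrict \<eta>' A"])
    fix g assume g: "g \<in> PiE A (\<lambda>_. {0::nat, 1})"
    show "restrict (\<lambda>e. if e \<in> A then g e else \<eta> e) A = g"
      using g by (auto simp: restrict_def PiE_def extensional_def fun_eq_iff)
    show "(\<lambda>e. if e \<in> A then g e else \<eta> e) \<in> {\<eta>'\<in>Eta E. \<forall>e\<in>E - A. \<eta>' e = \<eta> e}"
      using g eta AE by (auto simp: Eta_def PiE_def Pi_def)
    show "(\<Prod>e\<in>A. W p ((\<lambda>e. if e \<in> A then g e else \<eta> e) e) (d e)) = (\<Prod>e\<in>A. W p (g e) (d e))"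
      by (rule prod.cong) auto
  next
    fix \<eta>' assume h: "\<eta>' \<in> {\<eta>'\<in>Eta E. \<forall>e\<in>E - A. \<eta>' e = \<eta> e}"
    show "(\<lambda>e. if e \<in> A then restrict \<eta>' A e else \<eta> e) = \<eta>'"
    proof
      fix e
      show "(if e \<in> A then restrict \<eta>' A e else \<eta> e) = \<eta>' e"
        using h eta by (cases "e \<in> E") (auto simp: Eta_def)
    qed
    show "restrict \<eta>' A \<in> PiE A (\<lambda>_. {0, 1})"
      using h AE by (fastforce simp: Eta_def)
  qed
  also have "\<dots> = (\<Prod>e\<in>A. \<Sum>v\<in>{0, 1}. W p v (d e))"
    by (rule prod_sum_PiE[symmetric]) (auto simp: A_def)
  also have "\<dots> = (\<Prod>e\<in>A. W p 0 (d e) + W p 1 (d e))" by simp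
  finally show ?thesis unfolding A_def .
qed

lemma spin_lump:
  fixes E :: "('v::finite) set set"
  assumes edges: "\<forall>e\<in>E. \<exists>x y. x \<noteq> y \<and> e = {x, y}"
    and a: "a \<in> States E" and y: "y \<in> Sig"
  shows "(\<Sum>b\<in>{b\<in>States E. snd b = y}. joint_rate E p a b) = glauber_rate E p (snd a) y"
proof -
  obtain \<eta> \<sigma> where ab: "a = (\<eta>, \<sigma>)" by force
  have s: "\<sigma> \<in> Sig" "\<eta> \<in> Eta E" using a ab by (auto simp: States_def)
  have set: "{b\<in>States E. snd b = y} = (\<lambda>\<eta>'. (\<eta>', y)) ` Eta E"
    using y by (auto simp: States_def)
  have "(\<Sum>b\<in>{b\<in>States E. snd b = y}. joint_rate E p a b) = (\<Sum>\<eta>'\<in>Eta E. joint_rate E p (\<eta>, \<sigma>) (\<eta>', y))"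
    unfolding set ab by (subst sum.reindex) (auto simp: inj_on_def)
  also have "\<dots> = glauber_rate E p \<sigma> y"
  proof (cases "\<exists>x. y = flip \<sigma> x")
    case False
    then show ?thesis by (simp add: jr_nonflip glauber_rate_def)
  next
    case True
    then obtain x where x: "y = flip \<sigma> x" by blast
    have th: "(THE x'. y = flip \<sigma> x') = x"
      by (rule the_equality) (use x flip_inj[OF s(1)] in auto)
    have g: "glauber_rate E p \<sigma> y = (1 - p) ^ card {e\<in>edges_at E x. delta \<sigma> e = 1}"
      unfolding glauber_rate_def using True th by (simp add: Let_def)
    have "(\<Sum>\<eta>'\<in>Eta E. joint_rate E p (\<eta>, \<sigma>) (\<eta>', y)) =
       (\<Sum>\<eta>'\<in>Eta E. if \<forall>e\<in>E - edges_at E x. \<eta>' e = \<eta> e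
           then (\<Prod>e\<in>edges_at E x. W p (\<eta>' e) (real (delta (flip \<sigma> x) e))) else 0)"
      unfolding x by (rule sum.cong[OF refl]) (rule jr_eq[OF s(1)])
    also have "\<dots> = (\<Prod>e\<in>edges_at E x. W p 0 (real (delta (flip \<sigma> x) e)) + W p 1 (real (delta (flip \<sigma> x) e)))"
      by (rule sum_agree[OF s(2)])
    also have "\<dots> = (\<Prod>e\<in>edges_at E x. if delta \<sigma> e = 1 then 1 - p else 1)"
    proof (rule prod.cong[OF refl])
      fix e assume e: "e \<in> edges_at E x"
      show "W p 0 (real (delta (flip \<sigma> x) e)) + W p 1 (real (delta (flip \<sigma> x) e)) = (if delta \<sigma> e = 1 then 1 - p else 1)"
        using delta_flip_E[OF edges s(1) e] delta_01[of \<sigma> e] by (auto simp: W_def)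
    qed
    also have "\<dots> = (\<Prod>e\<in>edges_at E x \<inter> {e. delta \<sigma> e = 1}. 1 - p) * (\<Prod>e\<in>edges_at E x \<inter> - {e. delta \<sigma> e = 1}. 1)"
      by (rule prod.If_cases) simp
    also have "edges_at E x \<inter> {e. delta \<sigma> e = 1} = {e\<in>edges_at E x. delta \<sigma> e = 1}" by auto
    finally show ?thesis using g by simp
  qed
  finally show ?thesis using ab by simp
qed


lemma delta_sum:
  assumes "finite S" "a0 \<in> S"
  shows "(\<Sum>a\<in>S. (if a = a0 then 1 else 0) * X a) = (X a0 :: real)"
proof -
  have "(\<Sum>a\<in>S. (if a = a0 then 1 else 0) * X a) = (\<Sum>a\<in>S. if a0 = a then X a else 0)"
    by (rule sum.cong) auto
  then show ?thesis using assms by simp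
qed

lemma point_mass_fdd:
  fixes E :: "('v::finite) set set"
  assumes H: "marginal_is_mjp_with (States E) c fst (Eta E) c'"
    and a0: "a0 \<in> States E" and t: "0 \<le> t" and y: "y \<in> Eta E"
  shows "(\<Sum>b\<in>{b\<in>States E. fst b = y}. trans_fun (States E) c t a0 b) = trans_fun (Eta E) c' t (fst a0) y"
proof -
  define \<mu> where "\<mu> s = (if s = a0 then 1 else 0 :: real)" for s
  have fin: "finite (States E)" by (rule finite_States)
  have d: "is_distr (States E) \<mu>"
    unfolding is_distr_def \<mu>_def using a0 fin by (simp add: sum.delta')
  have v: "valid_times [(t, y)]" using t by (simp add: valid_times_def)
  have eq: "mfdd (States E) c \<mu> fst [(t, y)] = mfdd (Eta E) c' (push (States E) fst \<mu>) id [(t, y)]"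
    using H d v y unfolding marginal_is_mjp_with_def by auto
  have l: "mfdd (States E) c \<mu> fst [(t, y)] = (\<Sum>b\<in>{b\<in>States E. fst b = y}. trans_fun (States E) c t a0 b)"
    unfolding mfdd_def \<mu>_def using a0 fin by (simp add: delta_sum)
  have p: "push (States E) fst \<mu> w = (if w = fst a0 then 1 else 0)" for w
  proof -
    have "push (States E) fst \<mu> w = (\<Sum>s\<in>{s\<in>States E. fst s = w}. if s = a0 then 1 else 0)"
      by (simp add: push_def \<mu>_def)
    also have "\<dots> = (if a0 \<in> {s\<in>States E. fst s = w} then 1 else 0)"
      by (rule sum.delta) (use fin in simp)
    finally show ?thesis using a0 by auto
  qed
  have one: "{z\<in>Eta E. id z = y} = {y}" "{b. b = y \<and> b \<in> Eta E} = {y}" using y by auto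
  have fa0: "fst a0 \<in> Eta E" using a0 by (auto simp: States_def)
  have r: "mfdd (Eta E) c' (push (States E) fst \<mu>) id [(t, y)] = trans_fun (Eta E) c' t (fst a0) y"
    unfolding mfdd_def p using fa0 finite_Eta[of E] by (simp add: one delta_sum)
  show ?thesis using eq l r by simp
qed


lemma not_mjp:
  fixes E :: "('v::finite) set set"
  assumes edges: "\<forall>e\<in>E. \<exists>x y. x \<noteq> y \<and> e = {x, y}" and ne: "E \<noteq> {}"
    and p0: "0 < p" and p1: "p < 1"
  shows "\<not> marginal_is_mjp (States E) (joint_rate E p) fst (Eta E)"
proof
  assume "marginal_is_mjp (States E) (joint_rate E p) fst (Eta E)"
  then obtain c' where H: "marginal_is_mjp_with (States E) (joint_rate E p) fst (Eta E) c'"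
    unfolding marginal_is_mjp_def by blast
  obtain e0 where e0: "e0 \<in> E" using ne by blast
  obtain u v where uv: "u \<noteq> v" "e0 = {u, v}" using edges e0 by blast
  define S where "S = States E"
  define c where "c = joint_rate E p"
  define \<sigma>1 where "\<sigma>1 = (\<lambda>_::'v. 1::int)"
  define z0 where "z0 = (\<lambda>_::'v set. 0::nat)"
  define y where "y = (\<lambda>e. if e = e0 then 1 else 0::nat)"
  define F where "F = {b\<in>S. fst b = y}"
  define a where "a = (z0, \<sigma>1)"
  define a' where "a' = (z0, flip \<sigma>1 u)"
  have finS: "finite S" unfolding S_def by (rule finite_States)
  have finF: "finite F" unfolding F_def using finS by simp
  have s1: "\<sigma>1 \<in> Sig" by (simp add: \<sigma>1_def Sig_def)
  have z0E: "z0 \<in> Eta E" by (simp add: z0_def Eta_def)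
  have yE: "y \<in> Eta E" using e0 by (auto simp: y_def Eta_def)
  have aS: "a \<in> S" using s1 z0E by (simp add: a_def S_def States_def)
  have aS': "a' \<in> S" using flip_Sig[OF s1] z0E by (simp add: a'_def S_def States_def)
  have yz: "y \<noteq> z0" by (auto simp: y_def z0_def fun_eq_iff)
  have cb: "\<bar>c s s'\<bar> \<le> 1" "0 \<le> c s s'" for s s'
    using jr_bounds[of p E s s'] p0 p1 by (auto simp: c_def)
  have ra: "c a b = 0" if b: "b \<in> F" for b
  proof -
    obtain \<eta>'' \<sigma>'' where bb: "b = (\<eta>'', \<sigma>'')" by force
    have eta'': "\<eta>'' = y" using b bb by (simp add: F_def)
    show ?thesis
    proof (cases "\<exists>x. \<sigma>'' = flip \<sigma>1 x")
      case False
      then show ?thesis by (simp add: c_def a_def bb jr_nonflip)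
    next
      case True
      then obtain x where x: "\<sigma>'' = flip \<sigma>1 x" by blast
      have "c a b = (if \<forall>e\<in>E - edges_at E x. y e = z0 e
           then (\<Prod>e\<in>edges_at E x. W p (y e) (real (delta (flip \<sigma>1 x) e))) else 0)"
        unfolding c_def a_def bb x eta'' by (rule jr_eq[OF s1 yE])
      also have "\<dots> = 0"
      proof (cases "\<forall>e\<in>E - edges_at E x. y e = z0 e")
        case True
        then have "e0 \<in> edges_at E x"
          using e0 by (metis (mono_tags, lifting) DiffI y_def z0_def zero_neq_one)
        then have xe: "x \<in> e0" by (simp add: edges_at_def)
        have "delta (flip \<sigma>1 x) e0 = 0"
          using xe uv by (auto simp: delta_pair flip_def \<sigma>1_def)
        then have "W p (y e0) (real (delta (flip \<sigma>1 x) e0)) = 0" by (simp add: W_def y_def)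
        then have "(\<Prod>e\<in>edges_at E x. W p (y e) (real (delta (flip \<sigma>1 x) e))) = 0"
          using \<open>e0 \<in> edges_at E x\<close> by (intro prod_zero) auto
        then show ?thesis using True by simp
      next
        case False
        then show ?thesis by (simp only: if_False)
      qed
      finally show ?thesis .
    qed
  qed
  have b0F: "(y, \<sigma>1) \<in> F" using yE s1 by (simp add: F_def S_def States_def)
  have rb: "0 < c a' (y, \<sigma>1)"
  proof -
    have e0u: "e0 \<in> edges_at E u" using e0 uv by (simp add: edges_at_def)
    have ag: "\<forall>e\<in>E - edges_at E u. y e = z0 e" using e0u by (auto simp: y_def z0_def)
    have J: "joint_rate E p (z0, flip \<sigma>1 u) (y, flip (flip \<sigma>1 u) u) = (if \<forall>e\<in>E - edges_at E u. y e = z0 e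
           then (\<Prod>e\<in>edges_at E u. W p (y e) (real (delta (flip (flip \<sigma>1 u) u) e))) else 0)"
      by (rule jr_eq[OF flip_Sig[OF s1] yE])
    have "c a' (y, \<sigma>1) = (\<Prod>e\<in>edges_at E u. W p (y e) (real (delta (flip (flip \<sigma>1 u) u) e)))"
      using J ag unfolding c_def a'_def flip_flip by (metis (lifting))
    also have "\<dots> > 0"
    proof (rule prod_pos)
      fix e assume "e \<in> edges_at E u"
      have "delta \<sigma>1 e = 1" by (simp add: delta_def \<sigma>1_def)
      then show "0 < W p (y e) (real (delta (flip (flip \<sigma>1 u) u) e))"
        using p0 p1 by (simp add: W_def y_def)
    qed
    finally show ?thesis .
  qed
  have sa: "(\<Sum>b\<in>F. c a b) = 0" using ra by simp
  have sa': "0 < (\<Sum>b\<in>F. c a' b)"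
    by (rule sum_pos2[where f = "c a'", OF finF b0F rb]) (use cb in auto)
  define Q where "Q = generator S c"
  define K where "K = real (card S) * (real (card S) + 1)"
  have K0: "0 \<le> K" by (simp add: K_def)
  have Mb: "\<bar>matpow S Q n s b\<bar> \<le> K ^ n" for n s b
    unfolding Q_def K_def by (rule matpow_bound[OF finS generator_bound[OF finS cb(1)]]) simp
  have SMb: "\<bar>\<Sum>b\<in>F. matpow S Q n s b\<bar> \<le> real (card F) * K ^ n" for n s
  proof -
    have "\<bar>\<Sum>b\<in>F. matpow S Q n s b\<bar> \<le> (\<Sum>b\<in>F. \<bar>matpow S Q n s b\<bar>)" by (rule sum_abs)
    also have "\<dots> \<le> real (card F) * K ^ n" by (rule sum_bounded_above) (rule Mb)
    finally show ?thesis .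
  qed
  have ser: "(\<Sum>b\<in>F. trans_fun S c t s b) = (\<Sum>n. t ^ n / fact n * (\<Sum>b\<in>F. matpow S Q n s b))" for t s
  proof -
    have "(\<Sum>b\<in>F. trans_fun S c t s b) = (\<Sum>n. \<Sum>b\<in>F. t ^ n / fact n * matpow S Q n s b)"
      unfolding trans_fun_def Q_def
      by (rule suminf_sum[symmetric]) (rule trans_summable[OF finS cb(1)])
    then show ?thesis by (simp add: sum_distrib_left)
  qed
  have sm: "summable (\<lambda>n. t ^ n / fact n * (\<Sum>b\<in>F. matpow S Q n s b))" for t s
    by (rule exp_like_summable[OF SMb K0])
  define d where "d n = (\<Sum>b\<in>F. matpow S Q n a b) - (\<Sum>b\<in>F. matpow S Q n a' b)" for n
  have db: "\<bar>d n\<bar> \<le> (2 * real (card F)) * K ^ n" for n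
    using SMb[of n a] SMb[of n a'] unfolding d_def by linarith
  have dz: "(\<Sum>n. t ^ n / fact n * d n) = 0" if t: "0 \<le> t" for t
  proof -
    have "(\<Sum>b\<in>F. trans_fun S c t a b) = trans_fun (Eta E) c' t (fst a) y"
      unfolding F_def S_def c_def by (rule point_mass_fdd[OF H _ t yE]) (use aS in \<open>simp add: S_def\<close>)
    moreover have "(\<Sum>b\<in>F. trans_fun S c t a' b) = trans_fun (Eta E) c' t (fst a') y"
      unfolding F_def S_def c_def by (rule point_mass_fdd[OF H _ t yE]) (use aS' in \<open>simp add: S_def\<close>)
    moreover have "fst a = fst a'" by (simp add: a_def a'_def)
    ultimately have "(\<Sum>b\<in>F. trans_fun S c t a b) - (\<Sum>b\<in>F. trans_fun S c t a' b) = 0" by simp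
    then have "(\<Sum>n. t ^ n / fact n * (\<Sum>b\<in>F. matpow S Q n a b)) - (\<Sum>n. t ^ n / fact n * (\<Sum>b\<in>F. matpow S Q n a' b)) = 0"
      by (simp only: ser)
    then have "(\<Sum>n. t ^ n / fact n * (\<Sum>b\<in>F. matpow S Q n a b) - t ^ n / fact n * (\<Sum>b\<in>F. matpow S Q n a' b)) = 0"
      by (simp only: suminf_diff[OF sm sm])
    then show ?thesis by (simp add: d_def right_diff_distrib)
  qed
  have d1: "d 1 = 0" by (rule ps_deriv_zero[OF db K0 dz])
  have m1: "matpow S Q 1 s b = Q s b" if "s \<in> S" for s b
  proof -
    have "matpow S Q 1 s b = (\<Sum>m\<in>S. (if s = m then 1 else 0) * Q m b)" by simp
    also have "\<dots> = (\<Sum>m\<in>S. if s = m then Q m b else 0)" by (rule sum.cong) auto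
    also have "\<dots> = Q s b" using that finS by simp
    finally show ?thesis .
  qed
  have q: "Q s b = c s b" if "b \<in> F" "fst s = z0" for s b
  proof -
    have "s \<noteq> b" using that yz by (auto simp: F_def)
    then show ?thesis by (simp add: Q_def generator_def)
  qed
  have "d 1 = (\<Sum>b\<in>F. c a b) - (\<Sum>b\<in>F. c a' b)"
    unfolding d_def using m1[OF aS] m1[OF aS'] q by (simp add: a_def a'_def)
  then show False using d1 sa sa' by simp
qed

theorem theorem3:
  fixes E :: "('v::finite) set set" and p :: real
  assumes "\<forall>e\<in>E. \<exists>x y. x \<noteq> y \<and> e = {x, y}"
    and "E \<noteq> {}"
    and "0 < p" and "p < 1"
  shows "reversible (States E) (IP E p) (joint_rate E p)
    \<and> marginal_is_mjp_with (States E) (joint_rate E p) snd Sig (glauber_rate E p)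
    \<and> \<not> marginal_is_mjp (States E) (joint_rate E p) fst (Eta E)"
proof (intro conjI)
  show "reversible (States E) (IP E p) (joint_rate E p)" by (rule reversible_part[OF assms(1)])
  show "\<not> marginal_is_mjp (States E) (joint_rate E p) fst (Eta E)" by (rule not_mjp[OF assms])
  show "marginal_is_mjp_with (States E) (joint_rate E p) snd Sig (glauber_rate E p)"
  proof (rule lump_mjp)
    show "finite (States E)" by (rule finite_States)
    show "finite (Sig :: 'v sconf set)" by (rule finite_Sig)
    show "snd ` States E \<subseteq> Sig" by (auto simp: States_def)
    show "(\<Sum>b\<in>{b\<in>States E. snd b = y}. joint_rate E p a b) = glauber_rate E p (snd a) y"
      if "a \<in> States E" "y \<in> Sig" "y \<noteq> snd a" for a y
      by (rule spin_lump[OF assms(1) that(1,2)])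
    show "joint_rate E p a b = 0" if "a \<in> States E" "b \<in> States E" "b \<noteq> a" "snd b = snd a" for a b
    proof -
      obtain \<eta> \<sigma> where ab: "a = (\<eta>, \<sigma>)" by force
      obtain \<eta>' \<sigma>' where bb: "b = (\<eta>', \<sigma>')" by force
      have s: "\<sigma> \<in> Sig" using that ab by (auto simp: States_def)
      have "\<sigma>' = \<sigma>" using that ab bb by simp
      then have "\<forall>x. \<sigma>' \<noteq> flip \<sigma> x" using flip_neq[OF s] by metis
      then show ?thesis using ab bb by (simp add: jr_nonflip)
    qed
    show "\<bar>joint_rate E p a b\<bar> \<le> 1" for a b using jr_bounds[of p E a b] assms by auto
    show "\<bar>glauber_rate E p a b\<bar> \<le> 1" for a b using glauber_bounds[of p E a b] assms by auto
  qed
qed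

end
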